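(* Let $K$ be a field, $S=K[x_1,\ldots,x_n]$, $I\subset S$ a monomial ideal with $I\ne S$, with $\mathbb{Z}^n$-graded minimal free resolution of $S/I$, multidegrees $a_{ij}$ and scalar matrices $\lambda^{(i)}$ as in the context. Given $1<i\le p$ and $1\le j\le\beta_i$, let $k_1,\ldots,k_r$ be the integers $k$ with $\lambda^{(i)}_{kj}\ne0$. Then \[ x^{a_{ij}}=\operatorname{lcm}(x^{a_{i-1,k_1}},\ldots,x^{a_{i-1,k_r}}). \]
   Context: For $a\in\mathbb{N}^n$, $x^a=x_1^{a(1)}\cdots x_n^{a(n)}$. Let $0\to F_p\to\cdots\to F_1\to F_0\to S/I\to 0$ be the $\mathbb{Z}^n$-graded minimal free resolution of $S/I$ with differential $\partial$, where $F_0=S$ with basis $f_{01}$ of degree $0$, and $F_i=\bigoplus_{j=1}^{\beta_i}Sf_{ij}$ with $f_{ij}$ homogeneous of multidegree $a_{ij}\in\mathbb{N}^n$. Write $\partial(f_{ij})=\sum_k\lambda^{(i)}_{kj}x^{a_{ij}-a_{i-1,k}}f_{i-1,k}$ with $\lambda^{(i)}_{kj}\in K$, where $\lambda^{(i)}_{kj}=0$ whenever $a_{ij}-a_{i-1,k}\notin\mathbb{N}^n$. *)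

theory Defs
  imports "HOL-Library.Poly_Mapping"
begin

text \<open>Polynomial ring S = K[x_v | v :: 'n] (with 'n a finite type of n variables) is
  represented as a finitely supported map from exponent vectors
  (multidegrees in N^n) to coefficients, with the convolution product of Poly_Mapping.\<close>

type_synonym ('n, 'k) mpoly = "('n \<Rightarrow>\<^sub>0 nat) \<Rightarrow>\<^sub>0 'k"

definition monom :: "('n \<Rightarrow>\<^sub>0 nat) \<Rightarrow> ('n, 'k::comm_ring_1) mpoly" where
  "monom a = Poly_Mapping.single a 1"

definition const :: "'k::comm_ring_1 \<Rightarrow> ('n, 'k) mpoly" where
  "const c = Poly_Mapping.single 0 c"

definition mdeg_le :: "('n \<Rightarrow>\<^sub>0 nat) \<Rightarrow> ('n \<Rightarrow>\<^sub>0 nat) \<Rightarrow> bool" where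
  "mdeg_le a b \<longleftrightarrow> (\<forall>v. Poly_Mapping.lookup a v \<le> Poly_Mapping.lookup b v)"

definition is_ideal :: "'a::comm_ring_1 set \<Rightarrow> bool" where
  "is_ideal I \<longleftrightarrow> 0 \<in> I \<and> (\<forall>x\<in>I. \<forall>y\<in>I. x + y \<in> I) \<and> (\<forall>r. \<forall>x\<in>I. r * x \<in> I)"

definition ideal_gen :: "'a::comm_ring_1 set \<Rightarrow> 'a set" where
  "ideal_gen G = \<Inter>{J. is_ideal J \<and> G \<subseteq> J}"

definition monomial_ideal :: "('n, 'k::comm_ring_1) mpoly set \<Rightarrow> bool" where
  "monomial_ideal I \<longleftrightarrow> is_ideal I \<and> (\<exists>A. I = ideal_gen (monom ` A))"

definition max_ideal :: "('n, 'k::comm_ring_1) mpoly set" where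
  "max_ideal = {f. Poly_Mapping.lookup f 0 = 0}"

text \<open>F_i = S^{beta_i}, elements u with u j the coefficient of basis element f_ij, j \<in> {1..beta i}\<close>
definition freemod :: "(nat \<Rightarrow> nat) \<Rightarrow> nat \<Rightarrow> (nat \<Rightarrow> ('n, 'k::comm_ring_1) mpoly) set" where
  "freemod \<beta> i = {u. \<forall>j. j \<notin> {1..\<beta> i} \<longrightarrow> u j = 0}"

text \<open>the differential F_i \<rightarrow> F_{i-1}, \<partial>(f_ij) = \<Sum>_k lam i k j x^(a_ij - a_{i-1,k}) f_{i-1,k}\<close>
definition dmap :: "(nat \<Rightarrow> nat) \<Rightarrow> (nat \<Rightarrow> nat \<Rightarrow> ('n \<Rightarrow>\<^sub>0 nat)) \<Rightarrow> (nat \<Rightarrow> nat \<Rightarrow> nat \<Rightarrow> 'k::comm_ring_1)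
     \<Rightarrow> nat \<Rightarrow> (nat \<Rightarrow> ('n, 'k) mpoly) \<Rightarrow> (nat \<Rightarrow> ('n, 'k) mpoly)" where
  "dmap \<beta> a lam i u = (\<lambda>k. if k \<in> {1..\<beta> (i - 1)}
      then (\<Sum>j = 1..\<beta> i. const (lam i k j) * monom (a i j - a (i - 1) k) * u j) else 0)"

definition min_graded_free_res ::
  "('n, 'k::comm_ring_1) mpoly set \<Rightarrow> nat \<Rightarrow> (nat \<Rightarrow> nat) \<Rightarrow> (nat \<Rightarrow> nat \<Rightarrow> ('n \<Rightarrow>\<^sub>0 nat))
     \<Rightarrow> (nat \<Rightarrow> nat \<Rightarrow> nat \<Rightarrow> 'k) \<Rightarrow> bool" where
  "min_graded_free_res I p \<beta> a lam \<longleftrightarrow>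
     \<beta> 0 = 1 \<and> a 0 1 = 0 \<and>
     (\<forall>i\<in>{1..p}. \<forall>j\<in>{1..\<beta> i}. \<forall>k\<in>{1..\<beta> (i - 1)}.
         \<not> mdeg_le (a (i - 1) k) (a i j) \<longrightarrow> lam i k j = 0) \<and>
     \<comment> \<open>exactness at F_0: the image of F_1 \<rightarrow> F_0 = S is I\<close>
     (\<lambda>u. dmap \<beta> a lam 1 u 1) ` freemod \<beta> 1 = I \<and>
     \<comment> \<open>exactness at F_i, 1 \<le> i < p\<close>
     (\<forall>i. 1 \<le> i \<and> i < p \<longrightarrow>
         {u \<in> freemod \<beta> i. dmap \<beta> a lam i u = (\<lambda>_. 0)} = dmap \<beta> a lam (i + 1) ` freemod \<beta> (i + 1)) \<and>
     \<comment> \<open>exactness at F_p: F_p \<rightarrow> F_{p-1} injective\<close>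
     (1 \<le> p \<longrightarrow> {u \<in> freemod \<beta> p. dmap \<beta> a lam p u = (\<lambda>_. 0)} = {\<lambda>_. 0}) \<and>
     \<comment> \<open>minimality: \<partial>(F_i) \<subseteq> m F_{i-1}\<close>
     (\<forall>i\<in>{1..p}. \<forall>u\<in>freemod \<beta> i. \<forall>k. dmap \<beta> a lam i u k \<in> max_ideal)"

definition is_lcm :: "'a::comm_ring_1 \<Rightarrow> 'a set \<Rightarrow> bool" where
  "is_lcm m A \<longleftrightarrow> (\<forall>f\<in>A. f dvd m) \<and> (\<forall>g. (\<forall>f\<in>A. f dvd g) \<longrightarrow> m dvd g)"

end

theory Submission imports Defs begin

lemma lookup_monom_mult:
  fixes f :: "('n, 'k::comm_ring_1) mpoly"
  shows "Poly_Mapping.lookup (monom c * f) (c + x) = Poly_Mapping.lookup f x"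
proof -
  have "Poly_Mapping.lookup (monom c * f) (c + x) = (\<Sum>l. (1 when c = l) * (\<Sum>q. Poly_Mapping.lookup f q when c + x = l + q))"
    by (simp add: monom_def lookup_mult lookup_single)
  also have "\<dots> = (\<Sum>l. ((\<Sum>q. Poly_Mapping.lookup f q when c + x = l + q)) when c = l)"
    by (simp add: when_mult)
  also have "\<dots> = (\<Sum>q. Poly_Mapping.lookup f q when c + x = c + q)" by simp
  also have "\<dots> = (\<Sum>q. Poly_Mapping.lookup f q when x = q)" by simp
  also have "\<dots> = Poly_Mapping.lookup f x" by simp
  finally show ?thesis .
qed

lemma keys_monom_mult:
  fixes f :: "('n, 'k::comm_ring_1) mpoly"
  shows "Poly_Mapping.keys (monom c * f) \<subseteq> {c + q | q. q \<in> Poly_Mapping.keys f}"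
  using keys_mult[of "monom c" f] by (auto simp: monom_def)

lemma mdeg_le_add: "mdeg_le c (c + q)"
  by (simp add: mdeg_le_def lookup_add)

lemma mdeg_le_diff: "mdeg_le c y \<Longrightarrow> c + (y - c) = (y::'n \<Rightarrow>\<^sub>0 nat)"
  by (rule poly_mapping_eqI) (simp add: mdeg_le_def lookup_add lookup_minus)

lemma monom_mult: "(monom a :: ('n, 'k::comm_ring_1) mpoly) * monom b = monom (a + b)"
  by (simp add: monom_def mult_single)

lemma monom_mult_cancel:
  fixes f :: "('n, 'k::comm_ring_1) mpoly"
  assumes "monom c * f = 0" shows "f = 0"
proof (rule poly_mapping_eqI)
  fix x show "Poly_Mapping.lookup f x = Poly_Mapping.lookup 0 x"
    using lookup_monom_mult[of c f x] assms by simp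
qed

lemma monom_mult_lookup0:
  fixes f :: "('n, 'k::comm_ring_1) mpoly"
  assumes "c \<noteq> 0" shows "Poly_Mapping.lookup (monom c * f) 0 = 0"
proof (rule ccontr)
  assume "Poly_Mapping.lookup (monom c * f) 0 \<noteq> 0"
  hence "0 \<in> Poly_Mapping.keys (monom c * f)" by (simp add: in_keys_iff)
  then obtain q where "(0::'n\<Rightarrow>\<^sub>0nat) = c + q" using keys_monom_mult by blast
  hence "c = 0" by (metis add_is_0 lookup_add poly_mapping_eqI lookup_zero)
  with assms show False by simp
qed

lemma monom_dvd_iff:
  fixes f :: "('n, 'k::comm_ring_1) mpoly"
  shows "monom e dvd f \<longleftrightarrow> (\<forall>x\<in>Poly_Mapping.keys f. mdeg_le e x)"
proof
  assume "monom e dvd f"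
  then obtain q where "f = monom e * q" by (auto elim: dvdE)
  thus "\<forall>x\<in>Poly_Mapping.keys f. mdeg_le e x" using keys_monom_mult[of e q] mdeg_le_add by blast
next
  assume H: "\<forall>x\<in>Poly_Mapping.keys f. mdeg_le e x"
  have fin: "finite {x. Poly_Mapping.lookup f (e + x) \<noteq> 0}"
  proof (rule finite_subset)
    show "{x. Poly_Mapping.lookup f (e + x) \<noteq> 0} \<subseteq> (\<lambda>y. y - e) ` Poly_Mapping.keys f"
    proof
      fix x assume "x \<in> {x. Poly_Mapping.lookup f (e + x) \<noteq> 0}"
      hence "e + x \<in> Poly_Mapping.keys f" by (simp add: in_keys_iff)
      moreover have "x = (e + x) - e" by simp
      ultimately show "x \<in> (\<lambda>y. y - e) ` Poly_Mapping.keys f" by blast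
    qed
  qed simp
  define q where "q = Abs_poly_mapping (\<lambda>x. Poly_Mapping.lookup f (e + x))"
  have lq: "Poly_Mapping.lookup q x = Poly_Mapping.lookup f (e + x)" for x
    unfolding q_def using fin by (simp add: Abs_poly_mapping_inverse)
  have "f = monom e * q"
  proof (rule poly_mapping_eqI)
    fix y
    show "Poly_Mapping.lookup f y = Poly_Mapping.lookup (monom e * q) y"
    proof (cases "mdeg_le e y")
      case True
      hence "y = e + (y - e)" using mdeg_le_diff by metis
      then show ?thesis by (metis lookup_monom_mult lq)
    next
      case False
      hence "y \<notin> Poly_Mapping.keys f" using H by blast
      moreover have "y \<notin> Poly_Mapping.keys (monom e * q)" using keys_monom_mult[of e q] False mdeg_le_add by blast
      ultimately show ?thesis by (simp add: in_keys_iff)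
    qed
  qed
  thus "monom e dvd f" by simp
qed


lemma dmap_scale:
  "dmap \<beta> a lam i (\<lambda>k. m * u k) = (\<lambda>k. m * dmap \<beta> a lam i u k)"
  by (rule ext) (simp add: dmap_def sum_distrib_left mult.left_commute)

lemma dmap_diff:
  "dmap \<beta> a lam i (\<lambda>k. u k - v k) = (\<lambda>k. dmap \<beta> a lam i u k - dmap \<beta> a lam i v k)"
  by (rule ext) (simp add: dmap_def sum_subtractf right_diff_distrib)

theorem lemma1p5:
  fixes I :: "('n::finite, 'k::field) mpoly set"
    and p :: nat and \<beta> :: "nat \<Rightarrow> nat" and a :: "nat \<Rightarrow> nat \<Rightarrow> ('n \<Rightarrow>\<^sub>0 nat)"
    and lam :: "nat \<Rightarrow> nat \<Rightarrow> nat \<Rightarrow> 'k" and i j :: nat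
  assumes "monomial_ideal I"
    and "I \<noteq> UNIV"
    and "min_graded_free_res I p \<beta> a lam"
    and "1 < i" and "i \<le> p"
    and "1 \<le> j" and "j \<le> \<beta> i"
  shows "is_lcm (monom (a i j) :: ('n, 'k) mpoly)
           {monom (a (i - 1) k) | k. k \<in> {1..\<beta> (i - 1)} \<and> lam i k j \<noteq> 0}"
proof -
  note R = assms(3)[unfolded min_graded_free_res_def]
  have Rlam: "\<forall>i\<in>{1..p}. \<forall>j\<in>{1..\<beta> i}. \<forall>k\<in>{1..\<beta> (i - 1)}.
         \<not> mdeg_le (a (i - 1) k) (a i j) \<longrightarrow> lam i k j = 0"
    using R by (elim conjE) assumption
  have Rex: "\<forall>i. 1 \<le> i \<and> i < p \<longrightarrow>
         {u \<in> freemod \<beta> i. dmap \<beta> a lam i u = (\<lambda>_. 0)} = dmap \<beta> a lam (i + 1) ` freemod \<beta> (i + 1)"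
    using R by (elim conjE) assumption
  have Rinj: "1 \<le> p \<longrightarrow> {u \<in> freemod \<beta> p. dmap \<beta> a lam p u = (\<lambda>_. 0)} = {\<lambda>_. 0}"
    using R by (elim conjE) assumption
  have Rmin: "\<forall>i\<in>{1..p}. \<forall>u\<in>freemod \<beta> i. \<forall>k. dmap \<beta> a lam i u k \<in> max_ideal"
    using R by (elim conjE) assumption
  define Ks where "Ks = {k \<in> {1..\<beta> (i - 1)}. lam i k j \<noteq> 0}"
  have finKs: "finite Ks" unfolding Ks_def by simp
  define b :: "'n \<Rightarrow>\<^sub>0 nat" where
    "b = Abs_poly_mapping (\<lambda>v. Max (insert 0 ((\<lambda>k. Poly_Mapping.lookup (a (i - 1) k) v) ` Ks)))"
  have lb: "Poly_Mapping.lookup b v = Max (insert 0 ((\<lambda>k. Poly_Mapping.lookup (a (i - 1) k) v) ` Ks))" for v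
    unfolding b_def by (simp add: Abs_poly_mapping_inverse)
  have hk: "mdeg_le (a (i - 1) k) (a i j)" if "k \<in> Ks" for k
  proof (rule ccontr)
    assume "\<not> mdeg_le (a (i - 1) k) (a i j)"
    moreover have "i \<in> {1..p}" "j \<in> {1..\<beta> i}" "k \<in> {1..\<beta> (i - 1)}"
      using assms that by (auto simp: Ks_def)
    ultimately have "lam i k j = 0" using Rlam by blast
    thus False using that by (simp add: Ks_def)
  qed
  have hkb: "mdeg_le (a (i - 1) k) b" if "k \<in> Ks" for k
    unfolding mdeg_le_def lb using that finKs by (auto intro: Max_ge)
  have hbl: "mdeg_le b (a i j)"
    unfolding mdeg_le_def lb using finKs hk by (auto simp: mdeg_le_def intro!: Max.boundedI)
  have key: "b = a i j"
  proof (rule ccontr)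
    assume nb: "b \<noteq> a i j"
    define c where "c = a i j - b"
    have bc: "b + c = a i j" using mdeg_le_diff[OF hbl] by (simp add: c_def)
    have c0: "c \<noteq> 0" using bc nb by auto
    define e :: "nat \<Rightarrow> ('n, 'k) mpoly" where "e = (\<lambda>k. if k = j then 1 else 0)"
    define g :: "nat \<Rightarrow> ('n, 'k) mpoly" where
      "g = (\<lambda>k. if k \<in> {1..\<beta> (i - 1)} then const (lam i k j) * monom (b - a (i - 1) k) else 0)"
    have j_in: "j \<in> {1..\<beta> i}" using assms by simp
    have e_free: "e \<in> freemod \<beta> i" using j_in by (auto simp: freemod_def e_def)
    have g_free: "g \<in> freemod \<beta> (i - 1)" by (auto simp: freemod_def g_def)
    have de: "dmap \<beta> a lam i e = (\<lambda>k. if k \<in> {1..\<beta> (i - 1)} then const (lam i k j) * monom (a i j - a (i - 1) k) else 0)"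
    proof (rule ext)
      fix k
      have "(\<Sum>j' = 1..\<beta> i. const (lam i k j') * monom (a i j' - a (i - 1) k) * e j')
           = (\<Sum>j' = 1..\<beta> i. if j' = j then const (lam i k j') * monom (a i j' - a (i - 1) k) else 0)"
        by (rule sum.cong) (auto simp: e_def)
      also have "\<dots> = const (lam i k j) * monom (a i j - a (i - 1) k)"
        using j_in by (simp add: sum.delta)
      finally show "dmap \<beta> a lam i e k = (if k \<in> {1..\<beta> (i - 1)} then const (lam i k j) * monom (a i j - a (i - 1) k) else 0)"
        by (simp add: dmap_def)
    qed
    have deg: "dmap \<beta> a lam i e = (\<lambda>k. monom c * g k)"
    proof (rule ext)
      fix k
      show "dmap \<beta> a lam i e k = monom c * g k"
      proof (cases "k \<in> {1..\<beta> (i - 1)} \<and> lam i k j \<noteq> 0")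
        case True
        hence kK: "k \<in> Ks" by (simp add: Ks_def)
        have "a i j - a (i - 1) k = c + (b - a (i - 1) k)"
          using hk[OF kK] hkb[OF kK] hbl
          by (intro poly_mapping_eqI) (auto simp: mdeg_le_def c_def lookup_add lookup_minus intro: le_trans)
        then show ?thesis using True
          by (simp add: de g_def monom_mult[symmetric] mult.left_commute)
      next
        case False
        then show ?thesis by (auto simp: de g_def const_def)
      qed
    qed
    have i1: "1 \<le> i - 1 \<and> i - 1 < p" using assms(4,5) by linarith
    have ker_im: "{u \<in> freemod \<beta> (i - 1). dmap \<beta> a lam (i - 1) u = (\<lambda>_. 0)}
                 = dmap \<beta> a lam (i - 1 + 1) ` freemod \<beta> (i - 1 + 1)"
      by (rule Rex[rule_format]) (use i1 in auto)
    have ii: "i - 1 + 1 = i" using assms by simp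
    have "dmap \<beta> a lam i e \<in> dmap \<beta> a lam (i - 1 + 1) ` freemod \<beta> (i - 1 + 1)"
      unfolding ii by (rule imageI[OF e_free])
    hence "dmap \<beta> a lam i e \<in> {u \<in> freemod \<beta> (i - 1). dmap \<beta> a lam (i - 1) u = (\<lambda>_. 0)}"
      by (simp only: ker_im)
    hence "dmap \<beta> a lam (i - 1) (dmap \<beta> a lam i e) = (\<lambda>_. 0)" by simp
    hence eq0: "(\<lambda>k. monom c * dmap \<beta> a lam (i - 1) g k) = (\<lambda>_. 0)"
      by (simp add: deg dmap_scale)
    have "dmap \<beta> a lam (i - 1) g = (\<lambda>_. 0)"
    proof (rule ext)
      fix k
      have "monom c * dmap \<beta> a lam (i - 1) g k = 0" using fun_cong[OF eq0, of k] by (simp only:)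
      thus "dmap \<beta> a lam (i - 1) g k = 0" by (rule monom_mult_cancel)
    qed
    hence "g \<in> {u \<in> freemod \<beta> (i - 1). dmap \<beta> a lam (i - 1) u = (\<lambda>_. 0)}" using g_free by simp
    hence "g \<in> dmap \<beta> a lam (i - 1 + 1) ` freemod \<beta> (i - 1 + 1)" by (simp only: ker_im)
    then obtain h where h_free: "h \<in> freemod \<beta> i" and gh: "g = dmap \<beta> a lam i h" using ii by auto
    define u where "u = (\<lambda>k. e k - monom c * h k)"
    have u_free: "u \<in> freemod \<beta> i" using e_free h_free by (auto simp: freemod_def u_def)
    have du: "dmap \<beta> a lam i u = (\<lambda>_. 0)"
      unfolding u_def dmap_diff dmap_scale deg gh[symmetric] by simp
    have luj: "Poly_Mapping.lookup (u j) 0 = 1"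
      using monom_mult_lookup0[OF c0, of "h j"] by (simp add: u_def e_def lookup_minus)
    show False
    proof (cases "i < p")
      case True
      have "{v \<in> freemod \<beta> i. dmap \<beta> a lam i v = (\<lambda>_. 0)} = dmap \<beta> a lam (i + 1) ` freemod \<beta> (i + 1)"
        using Rex True assms(4) by simp
      moreover have "u \<in> {v \<in> freemod \<beta> i. dmap \<beta> a lam i v = (\<lambda>_. 0)}" using u_free du by simp
      ultimately have "u \<in> dmap \<beta> a lam (i + 1) ` freemod \<beta> (i + 1)" by (simp only:)
      then obtain w where w: "w \<in> freemod \<beta> (i + 1)" "u = dmap \<beta> a lam (i + 1) w"
        by (auto simp only: image_iff)
      have "i + 1 \<in> {1..p}" using True by simp
      hence "u j \<in> max_ideal" using Rmin w by simp
      thus False using luj by (simp add: max_ideal_def)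
    next
      case False
      hence "i = p" using assms by simp
      hence "u \<in> {v \<in> freemod \<beta> p. dmap \<beta> a lam p v = (\<lambda>_. 0)}" using u_free du by simp
      hence "u \<in> {\<lambda>_. 0}" using Rinj assms(4) \<open>i = p\<close> by simp
      hence "u = (\<lambda>_. 0)" by simp
      thus False using luj by simp
    qed
  qed
  show ?thesis
    unfolding is_lcm_def
  proof (intro conjI allI impI ballI)
    fix f :: "('n, 'k) mpoly" assume "f \<in> {monom (a (i - 1) k) | k. k \<in> {1..\<beta> (i - 1)} \<and> lam i k j \<noteq> 0}"
    then obtain k where kK: "k \<in> Ks" and f: "f = monom (a (i - 1) k)" by (auto simp: Ks_def)
    have "monom (a i j) = f * (monom (a i j - a (i - 1) k) :: ('n, 'k) mpoly)"
      using mdeg_le_diff[OF hk[OF kK]] by (simp add: f monom_mult)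
    thus "f dvd (monom (a i j) :: ('n, 'k) mpoly)" by (metis dvd_triv_left)
  next
    fix G :: "('n, 'k) mpoly"
    assume H: "\<forall>f\<in>{monom (a (i - 1) k) | k. k \<in> {1..\<beta> (i - 1)} \<and> lam i k j \<noteq> 0}. f dvd G"
    have "\<forall>x\<in>Poly_Mapping.keys G. mdeg_le b x"
    proof
      fix x assume x: "x \<in> Poly_Mapping.keys G"
      have "mdeg_le (a (i - 1) k) x" if "k \<in> Ks" for k
        using H that x by (auto simp: Ks_def monom_dvd_iff)
      thus "mdeg_le b x" unfolding mdeg_le_def lb using finKs
        by (auto simp: mdeg_le_def intro!: Max.boundedI)
    qed
    thus "monom (a i j) dvd G" using key monom_dvd_iff by metis
  qed
qed

end
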